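(* Let $G=(V,E)$ be an undirected graph with $n$ vertices and non-negative edge weights of maximum value $W$, let $K$ be a positive integer and $\varepsilon>0$. Let $B\subseteq V$ be obtained by including each vertex independently with probability $C\log(n)/K$, for a sufficiently large constant $C>0$. Consider the oracle that, on query $(s,t)$, returns $+\infty$ if $s$ and $t$ are in different connected components and otherwise returns $\min(\widehat d_1,\widehat d_2)$, where $\widehat d_1=\min\{d_{1/\varepsilon}(s,v)+d_{1/\varepsilon}(v,t): v\in A_{1/\varepsilon}(s)\cap A_{1/\varepsilon}(t)\}$ and $\widehat d_2=\min\{d(s,p(v))+d(p(v),t): v\in A_{1/\varepsilon}(s)\cup A_{1/\varepsilon}(t)\}$. Then with high probability, simultaneously for all queries $(s,t)\in V^2$, the returned value $\widehat d(s,t)$ satisfies $d(s,t)\le \widehat d(s,t)\le (1+\varepsilon)\,d(s,t)+2W$.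
   Context: $d(u,v)$ is the weighted distance in $G$. $K[v]$ is a set of the $K$ vertices closest to $v$ (including $v$; ties arbitrary). $H$ is the auxiliary graph on $V$ with, for each $v$, an edge (hop) from $v$ to each $v'\in K[v]\setminus\{v\}$ of weight $d(v,v')$, hops from $v$ going only to elements of $K[v]$. $A_{1/\varepsilon}(x)$ is the set of vertices reachable from $x$ in $H$ with at most $\lceil 1/\varepsilon\rceil$ hops. For $v\in A_{1/\varepsilon}(s)$, $d_{1/\varepsilon}(s,v)$ is the minimum total weight of a walk in $H$ from $s$ to $v$ with at most $\lceil1/\varepsilon\rceil$ hops; for $v\in A_{1/\varepsilon}(t)$, $d_{1/\varepsilon}(v,t)$ is the minimum total weight of such a walk from $t$ to $v$. $p(v)\in B$ denotes a pivot in $B$ closest to $v$ in $G$. "With high probability" means with probability at least $1-n^{-c}$ for some constant $c>0$. *)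

theory Defs
  imports "HOL-Probability.Probability"
begin

definition is_walk :: "('a \<times> 'a) set \<Rightarrow> 'a list \<Rightarrow> bool" where
  "is_walk R xs \<longleftrightarrow> xs \<noteq> [] \<and> (\<forall>i. Suc i < length xs \<longrightarrow> (xs ! i, xs ! Suc i) \<in> R)"

definition walk_weight :: "('a \<Rightarrow> 'a \<Rightarrow> 'b::comm_monoid_add) \<Rightarrow> 'a list \<Rightarrow> 'b" where
  "walk_weight f xs = (\<Sum>i < length xs - 1. f (xs ! i) (xs ! Suc i))"

definition walks :: "('a \<times> 'a) set \<Rightarrow> 'a \<Rightarrow> 'a \<Rightarrow> 'a list set" where
  "walks R x y = {xs. is_walk R xs \<and> hd xs = x \<and> last xs = y}"

definition gdist :: "('a \<times> 'a) set \<Rightarrow> ('a \<Rightarrow> 'a \<Rightarrow> real) \<Rightarrow> 'a \<Rightarrow> 'a \<Rightarrow> ereal" where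
  "gdist E w u v = Inf (walk_weight (\<lambda>a b. ereal (w a b)) ` walks E u v)"

definition hop_walks :: "('a \<times> 'a) set \<Rightarrow> nat \<Rightarrow> 'a \<Rightarrow> 'a \<Rightarrow> 'a list set" where
  "hop_walks R h x y = {xs \<in> walks R x y. length xs \<le> h + 1}"

definition reach_hops :: "('a \<times> 'a) set \<Rightarrow> nat \<Rightarrow> 'a \<Rightarrow> 'a set" where
  "reach_hops R h x = {y. hop_walks R h x y \<noteq> {}}"

definition hop_dist :: "('a \<times> 'a) set \<Rightarrow> ('a \<Rightarrow> 'a \<Rightarrow> ereal) \<Rightarrow> nat \<Rightarrow> 'a \<Rightarrow> 'a \<Rightarrow> ereal" where
  "hop_dist R wt h x y = Inf (walk_weight wt ` hop_walks R h x y)"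

definition knn_sets :: "'a set \<Rightarrow> ('a \<times> 'a) set \<Rightarrow> ('a \<Rightarrow> 'a \<Rightarrow> real) \<Rightarrow> nat \<Rightarrow> ('a \<Rightarrow> 'a set) \<Rightarrow> bool" where
  "knn_sets V E w K Ksel \<longleftrightarrow> (\<forall>v\<in>V. v \<in> Ksel v \<and> Ksel v \<subseteq> V \<and> card (Ksel v) = min K (card V) \<and>
      (\<forall>x\<in>Ksel v. \<forall>y\<in>V - Ksel v. gdist E w v x \<le> gdist E w v y))"

definition hop_graph :: "'a set \<Rightarrow> ('a \<Rightarrow> 'a set) \<Rightarrow> ('a \<times> 'a) set" where
  "hop_graph V Ksel = {(v, v'). v \<in> V \<and> v' \<in> Ksel v \<and> v' \<noteq> v}"

definition pivot_fun :: "'a set \<Rightarrow> ('a \<times> 'a) set \<Rightarrow> ('a \<Rightarrow> 'a \<Rightarrow> real) \<Rightarrow> ('a set \<Rightarrow> 'a \<Rightarrow> 'a) \<Rightarrow> bool" where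
  "pivot_fun V E w piv \<longleftrightarrow> (\<forall>B. B \<subseteq> V \<and> B \<noteq> {} \<longrightarrow>
      (\<forall>v\<in>V. piv B v \<in> B \<and> (\<forall>b\<in>B. gdist E w v (piv B v) \<le> gdist E w v b)))"

(* the dist_query answer dhat(s,t); hops in H have weight d(v,v'); h = \<lceil>1/\<epsilon>\<rceil> *)
definition dist_query :: "'a set \<Rightarrow> ('a \<times> 'a) set \<Rightarrow> ('a \<Rightarrow> 'a \<Rightarrow> real) \<Rightarrow> ('a \<Rightarrow> 'a set) \<Rightarrow>
    ('a set \<Rightarrow> 'a \<Rightarrow> 'a) \<Rightarrow> nat \<Rightarrow> 'a set \<Rightarrow> 'a \<Rightarrow> 'a \<Rightarrow> ereal" where
  "dist_query V E w Ksel piv h B s t =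
     (if (s, t) \<notin> E\<^sup>* then \<infinity> else
      (let R = hop_graph V Ksel; hw = gdist E w;
           As = reach_hops R h s; At = reach_hops R h t;
           d1 = Inf ((\<lambda>v. hop_dist R hw h s v + hop_dist R hw h t v) ` (As \<inter> At));
           d2 = (if B = {} then \<infinity> else
                 Inf ((\<lambda>v. gdist E w s (piv B v) + gdist E w (piv B v) t) ` (As \<union> At)))
       in min d1 d2))"

end

theory Submission
  imports Defs
begin


lemma is_walk_single[simp]: "is_walk R [a]"
  by (simp add: is_walk_def)

lemma is_walk_Nil[simp]: "\<not> is_walk R []"
  by (simp add: is_walk_def)

lemma is_walk_cons2: "is_walk R (a # b # ys) \<longleftrightarrow> (a, b) \<in> R \<and> is_walk R (b # ys)"
  unfolding is_walk_def
  by (auto simp: nth_Cons split: nat.splits)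

lemma walk_weight_single[simp]: "walk_weight wt [a] = 0"
  by (simp add: walk_weight_def)

lemma walk_weight_cons2: "walk_weight wt (a # b # ys) = wt a b + walk_weight wt (b # ys)"
  unfolding walk_weight_def
  by (simp add: sum.lessThan_Suc_shift del: sum.lessThan_Suc)

lemma walk_snoc:
  assumes "is_walk R ys" "(last ys, y) \<in> R"
  shows "is_walk R (ys @ [y]) \<and> walk_weight wt (ys @ [y]) = walk_weight wt ys + wt (last ys) y"
  using assms
proof (induction ys rule: induct_list012)
  case 1 then show ?case by simp
next
  case (2 a) then show ?case by (simp add: is_walk_cons2 walk_weight_cons2)
next
  case (3 a b zs)
  then show ?case by (simp add: is_walk_cons2 walk_weight_cons2 add.assoc)
qed

lemma walk_append:
  assumes "is_walk R p" "is_walk R q" "last p = hd q"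
  shows "is_walk R (p @ tl q) \<and> walk_weight (wt::'a\<Rightarrow>'a\<Rightarrow>'b::comm_monoid_add) (p @ tl q) = walk_weight wt p + walk_weight wt q
     \<and> hd (p @ tl q) = hd p \<and> last (p @ tl q) = last q"
  using assms
proof (induction p rule: induct_list012)
  case 1 then show ?case by simp
next
  case (2 a)
  then have "q = a # tl q" by (cases q) auto
  then show ?case using 2 by (metis append.left_neutral append_Cons add_0 walk_weight_single list.sel(1))
next
  case (3 a b zs)
  then have ih: "is_walk R ((b # zs) @ tl q) \<and> walk_weight wt ((b # zs) @ tl q) = walk_weight wt (b # zs) + walk_weight wt q
     \<and> hd ((b # zs) @ tl q) = hd (b#zs) \<and> last ((b # zs) @ tl q) = last q"
    by (simp add: is_walk_cons2)
  have e: "(a # b # zs) @ tl q = a # ((b # zs) @ tl q)" by simp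
  show ?case unfolding e using ih 3(3)
    by (metis (no_types, lifting) add.assoc append_Cons is_walk_cons2 last_ConsR list.discI list.sel(1) walk_weight_cons2)
qed

lemma walk_rev:
  assumes "sym R" "\<forall>(a,b)\<in>R. wt a b = wt b a" "is_walk R p"
  shows "is_walk R (rev p) \<and> walk_weight wt (rev p) = walk_weight wt p"
  using assms(3)
proof (induction p rule: induct_list012)
  case 1 then show ?case by simp
next
  case (2 a) then show ?case by simp
next
  case (3 a b zs)
  then have ih: "is_walk R (rev (b # zs)) \<and> walk_weight wt (rev (b#zs)) = walk_weight wt (b # zs)"
    and ab: "(a, b) \<in> R" by (auto simp: is_walk_cons2)
  have ba: "(b, a) \<in> R" using ab assms(1) by (meson symD)
  have l: "last (rev (b # zs)) = b" by simp
  have e: "rev (a # b # zs) = rev (b # zs) @ [a]" by simp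
  show ?case unfolding e using walk_snoc[of R "rev (b#zs)" a wt] ih ba ab assms(2)
    by (auto simp: walk_weight_cons2 add.commute)
qed

lemma walk_rtrancl: "is_walk R p \<Longrightarrow> (hd p, last p) \<in> R\<^sup>*"
proof (induction p rule: induct_list012)
  case (3 a b zs)
  then have "(b, last (b#zs)) \<in> R\<^sup>*" and ab: "(a,b) \<in> R" by (auto simp: is_walk_cons2)
  then show ?case using converse_rtrancl_into_rtrancl[OF ab] by simp
qed auto

lemma walk_weight_nonneg:
  assumes "\<And>a b. (a, b) \<in> R \<Longrightarrow> 0 \<le> wt a b" "is_walk R p"
  shows "0 \<le> (walk_weight wt p :: ereal)"
  using assms(2)
proof (induction p rule: induct_list012)
  case (3 a b zs)
  then show ?case using assms(1) by (simp add: is_walk_cons2 walk_weight_cons2)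
qed auto

lemma walk_chain_tri:
  fixes d :: "'a \<Rightarrow> 'a \<Rightarrow> ereal"
  assumes tri: "\<And>u v z. d u z \<le> d u v + d v z" and refl: "\<And>u. d u u \<le> 0" and "ys \<noteq> []"
  shows "d (hd ys) (last ys) \<le> walk_weight d ys"
  using assms(3)
proof (induction ys rule: induct_list012)
  case (2 a) then show ?case using refl by simp
next
  case (3 a b zs)
  then have "d b (last (b#zs)) \<le> walk_weight d (b # zs)" by simp
  then have "d a (last (b#zs)) \<le> d a b + walk_weight d (b # zs)"
    using tri[of a "last (b#zs)" b] by (meson add_left_mono order_trans)
  then show ?case by (simp add: walk_weight_cons2)
qed auto

lemma walk_weight_ereal: "walk_weight (\<lambda>a b. ereal (w a b)) p = ereal (walk_weight w p)"
  by (simp add: walk_weight_def)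

context
  fixes E :: "('a \<times> 'a) set" and w :: "'a \<Rightarrow> 'a \<Rightarrow> real"
  assumes wnn: "\<forall>(u, v)\<in>E. 0 \<le> w u v"
begin

lemma gdist_le_walk: "p \<in> walks E u v \<Longrightarrow> gdist E w u v \<le> walk_weight (\<lambda>a b. ereal (w a b)) p"
  unfolding gdist_def by (rule INF_lower)

lemma gdist_nonneg: "0 \<le> gdist E w u v"
  unfolding gdist_def
  by (rule INF_greatest, rule walk_weight_nonneg[of E]) (use wnn in \<open>auto simp: walks_def\<close>)

lemma gdist_refl: "gdist E w u u = 0"
proof -
  have "[u] \<in> walks E u u" by (simp add: walks_def)
  then have "gdist E w u u \<le> 0" using gdist_le_walk by fastforce
  then show ?thesis using gdist_nonneg[of u u] by simp
qed

lemma gdist_infty: "(u, v) \<notin> E\<^sup>* \<Longrightarrow> gdist E w u v = \<infinity>"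
proof -
  assume "(u, v) \<notin> E\<^sup>*"
  then have "walks E u v = {}" unfolding walks_def using walk_rtrancl by blast
  then show ?thesis by (simp add: gdist_def top_ereal_def)
qed

lemma gdist_sym:
  assumes "sym E" "\<forall>(a,b)\<in>E. w a b = w b a"
  shows "gdist E w u v = gdist E w v u"
proof -
  have *: "gdist E w u v \<le> gdist E w v u" for u v
    unfolding gdist_def
  proof (rule INF_greatest)
    fix p assume "p \<in> walks E v u"
    then have "rev p \<in> walks E u v" and "walk_weight (\<lambda>a b. ereal (w a b)) (rev p) = walk_weight (\<lambda>a b. ereal (w a b)) p"
      using walk_rev[of E "\<lambda>a b. ereal (w a b)" p] assms
      by (auto simp: walks_def hd_rev last_rev)
    then show "Inf ((walk_weight (\<lambda>a b. ereal (w a b))) ` walks E u v) \<le> walk_weight (\<lambda>a b. ereal (w a b)) p"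
      by (metis INF_lower)
  qed
  show ?thesis using *[of u v] *[of v u] by simp
qed

lemma gdist_tri: "gdist E w u z \<le> gdist E w u v + gdist E w v z"
proof (cases "walks E u v = {} \<or> walks E v z = {}")
  case True
  then have "gdist E w u v = \<infinity> \<or> gdist E w v z = \<infinity>" by (auto simp: gdist_def top_ereal_def)
  then show ?thesis using gdist_nonneg[of u v] gdist_nonneg[of v z] by auto
next
  case False
  let ?f = "walk_weight (\<lambda>a b. ereal (w a b))"
  have nn: "\<And>p x y. p \<in> walks E x y \<Longrightarrow> 0 \<le> ?f p"
    by (rule walk_weight_nonneg[of E]) (use wnn in \<open>auto simp: walks_def\<close>)
  have key: "gdist E w u z \<le> ?f p + ?f q" if "p \<in> walks E u v" "q \<in> walks E v z" for p q
  proof -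
    have "p @ tl q \<in> walks E u z \<and> ?f (p @ tl q) = ?f p + ?f q"
      using walk_append[of E p q] that by (auto simp: walks_def)
    then show ?thesis by (metis gdist_le_walk)
  qed
  have "gdist E w u v + gdist E w v z = (INF p\<in>walks E u v. ?f p + gdist E w v z)"
    unfolding gdist_def[of E w u v]
    by (rule INF_ereal_add_left[symmetric]) (use False gdist_nonneg[of v z] nn in auto)
  also have "\<dots> = (INF p\<in>walks E u v. INF q\<in>walks E v z. ?f p + ?f q)"
    unfolding gdist_def[of E w v z]
    by (rule INF_cong[OF refl], rule INF_ereal_add_right[symmetric]) (use False nn in \<open>auto dest: nn\<close>)
  finally show ?thesis using key by (metis (no_types, lifting) INF_greatest)
qed

end



definition hw_ok :: "('a \<times> 'a) set \<Rightarrow> ('a \<Rightarrow> 'a \<Rightarrow> ereal) \<Rightarrow> nat \<Rightarrow> 'a \<Rightarrow> 'a \<Rightarrow> ereal \<Rightarrow> bool" where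
  "hw_ok R wt k s v c \<longleftrightarrow> (\<exists>ys\<in>hop_walks R k s v. walk_weight wt ys \<le> c)"

lemma hw0: "hw_ok R wt k s s 0"
  unfolding hw_ok_def hop_walks_def walks_def
  by (rule bexI[of _ "[s]"]) auto

lemma hw_mono: "k \<le> k' \<Longrightarrow> c \<le> c' \<Longrightarrow> hw_ok R wt k s v c \<Longrightarrow> hw_ok R wt k' s v c'"
  unfolding hw_ok_def hop_walks_def by (auto intro: order_trans)

lemma hw_ext:
  assumes "R = hop_graph V Ksel" "\<And>a b. 0 \<le> wt a b" "v \<in> V" "y \<in> Ksel v" "hw_ok R wt k s v c"
  shows "hw_ok R wt (Suc k) s y (c + wt v y)"
proof -
  obtain ys where ys: "ys \<in> hop_walks R k s v" "walk_weight wt ys \<le> c"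
    using assms(5) unfolding hw_ok_def by blast
  show ?thesis
  proof (cases "y = v")
    case True
    then show ?thesis using hw_mono[OF _ _ assms(5), of "Suc k" "c + wt v y"] assms(2)[of v y]
      by (simp add: add_increasing2)
  next
    case False
    have yw: "is_walk R ys" "hd ys = s" "last ys = v" "length ys \<le> k + 1" "ys \<noteq> []"
      using ys(1) by (auto simp: hop_walks_def walks_def)
    have "(last ys, y) \<in> R" using yw assms False by (auto simp: hop_graph_def)
    then have "is_walk R (ys @ [y]) \<and> walk_weight wt (ys @ [y]) = walk_weight wt ys + wt (last ys) y"
      by (rule walk_snoc[OF yw(1)])
    then show ?thesis unfolding hw_ok_def hop_walks_def walks_def using yw ys(2)
      by (intro bexI[of _ "ys @ [y]"]) (auto intro: add_right_mono)
  qed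
qed

lemma hw_reach:
  assumes "hw_ok R wt k s v c" "k \<le> h"
  shows "v \<in> reach_hops R h s \<and> hop_dist R wt h s v \<le> c"
proof -
  obtain ys where ys: "ys \<in> hop_walks R k s v" "walk_weight wt ys \<le> c"
    using assms(1) unfolding hw_ok_def by blast
  then have "ys \<in> hop_walks R h s v" using assms(2) by (auto simp: hop_walks_def)
  then show ?thesis unfolding reach_hops_def hop_dist_def using ys(2)
    by (auto intro: INF_lower2)
qed

lemma side:
  fixes d :: "'a \<Rightarrow> 'a \<Rightarrow> ereal" and x :: "nat \<Rightarrow> 'a" and pl :: "nat \<Rightarrow> nat \<Rightarrow> real"
  assumes dsym: "\<And>u v. d u v = d v u" and dtri: "\<And>u v z. d u z \<le> d u v + d v z"
    and dnn: "\<And>u v. 0 \<le> d u v"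
    and knn: "\<And>v. v \<in> V \<Longrightarrow> v \<in> Ksel v \<and> Ksel v \<subseteq> V \<and> (\<forall>a\<in>Ksel v. \<forall>b\<in>V - Ksel v. d v a \<le> d v b)"
    and good: "\<And>v. v \<in> V \<Longrightarrow> Ksel v \<noteq> V \<Longrightarrow> Ksel v \<inter> B \<noteq> {}"
    and piv: "B \<noteq> {} \<Longrightarrow> \<forall>v\<in>V. piv B v \<in> B \<and> (\<forall>b\<in>B. d v (piv B v) \<le> d v b)"
    and R: "R = hop_graph V Ksel"
    and padd: "\<And>i j k. i \<le> j \<Longrightarrow> j \<le> k \<Longrightarrow> k \<le> m \<Longrightarrow> pl i j + pl j k = pl i k"
    and pnn: "\<And>i j. i \<le> j \<Longrightarrow> j \<le> m \<Longrightarrow> 0 \<le> pl i j"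
    and pW: "\<And>q. q < m \<Longrightarrow> pl q (Suc q) \<le> W"
    and dpl: "\<And>i j. i \<le> j \<Longrightarrow> j \<le> m \<Longrightarrow> d (x i) (x j) \<le> ereal (pl i j)"
    and xV: "\<And>q. q \<le> m \<Longrightarrow> x q \<in> V" and x0: "x 0 = s" and xm: "x m = t"
    and kh: "k \<le> h"
  shows "(\<exists>v. v \<in> reach_hops R h s \<and> B \<noteq> {} \<and> d s (piv B v) + d (piv B v) t \<le> ereal (pl 0 m + 2*\<theta> + 2*W))
    \<or> (t \<in> reach_hops R h s \<and> hop_dist R d h s t \<le> ereal (pl 0 m))
    \<or> (\<exists>i<m. (k = 0 \<or> real k * \<theta> < pl 0 i) \<and> (\<forall>q\<le>i. hw_ok R d k s (x q) (ereal (pl 0 q))))"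
  using kh
proof (induction k)
  case 0
  have p00: "pl 0 0 = 0" using padd[of 0 0 0] by simp
  show ?case
  proof (cases "m = 0")
    case True
    then have "t = s" using x0 xm by simp
    then show ?thesis using hw_reach[OF hw0[of R d 0 s], of h] p00 True by (simp add: zero_ereal_def)
  next
    case False
    then show ?thesis using hw0[of R d 0 s] x0 p00 by (auto simp: zero_ereal_def)
  qed
next
  case (Suc k)
  then have kh': "k \<le> h" by simp
  from Suc.IH[OF kh'] consider
      (A) "\<exists>v. v \<in> reach_hops R h s \<and> B \<noteq> {} \<and> d s (piv B v) + d (piv B v) t \<le> ereal (pl 0 m + 2*\<theta> + 2*W)"
    | (B) "t \<in> reach_hops R h s \<and> hop_dist R d h s t \<le> ereal (pl 0 m)"
    | (C) "\<exists>i<m. (k = 0 \<or> real k * \<theta> < pl 0 i) \<and> (\<forall>q\<le>i. hw_ok R d k s (x q) (ereal (pl 0 q)))"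
    by blast
  then show ?case
  proof cases
    case A then show ?thesis by blast
  next
    case B then show ?thesis by blast
  next
    case C
    then obtain i where im: "i < m" and hk: "k = 0 \<or> real k * \<theta> < pl 0 i"
      and hall: "\<forall>q\<le>i. hw_ok R d k s (x q) (ereal (pl 0 q))" by blast
    define v where "v = x i"
    have vV: "v \<in> V" using xV im v_def by simp
    have kth: "real k * \<theta> \<le> pl 0 i" using hk pnn[of 0 i] im by auto
    have reachq: "hw_ok R d (Suc k) s (x q) (ereal (pl 0 q))"
      if "i \<le> q" "q \<le> m" "x q \<in> Ksel v" for q
    proof -
      have "hw_ok R d k s v (ereal (pl 0 i))" using hall[rule_format, of i] unfolding v_def by simp
      then have a1: "hw_ok R d (Suc k) s (x q) (ereal (pl 0 i) + d v (x q))"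
        by (rule hw_ext[of R V Ksel d v "x q" k s "ereal (pl 0 i)", OF R dnn vV that(3)])
      have a2: "ereal (pl 0 i) + d v (x q) \<le> ereal (pl 0 q)"
      proof -
        have "d v (x q) \<le> ereal (pl i q)" using dpl that v_def by simp
        then have "ereal (pl 0 i) + d v (x q) \<le> ereal (pl 0 i) + ereal (pl i q)" by (rule add_left_mono)
        also have "\<dots> = ereal (pl 0 q)" using padd[of 0 i q] that by simp
        finally show ?thesis .
      qed
      show ?thesis using hw_mono[OF order_refl a2 a1] .
    qed
    show ?thesis
    proof (cases "\<forall>q. i \<le> q \<and> q \<le> m \<longrightarrow> x q \<in> Ksel v")
      case True
      then have "hw_ok R d (Suc k) s t (ereal (pl 0 m))" using reachq[of m] True[rule_format, of m] im xm by simp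
      then have "t \<in> reach_hops R h s \<and> hop_dist R d h s t \<le> ereal (pl 0 m)" by (rule hw_reach[OF _ Suc.prems])
      then show ?thesis by blast
    next
      case False
      define q0 where "q0 = (LEAST q. i \<le> q \<and> q \<le> m \<and> x q \<notin> Ksel v)"
      have q0: "i \<le> q0 \<and> q0 \<le> m \<and> x q0 \<notin> Ksel v"
        unfolding q0_def using False by (metis (mono_tags, lifting) LeastI)
      have below: "x q \<in> Ksel v" if "i \<le> q" "q < q0" for q
        using not_less_Least[of q "\<lambda>q. i \<le> q \<and> q \<le> m \<and> x q \<notin> Ksel v"] that q0
        unfolding q0_def[symmetric] by auto
      have "q0 \<noteq> i" using q0 knn[OF vV] v_def by auto
      then obtain j where j: "q0 = Suc j" "i \<le> j" "j < m" using q0 by (cases q0) auto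
      have allj: "\<forall>q\<le>j. hw_ok R d (Suc k) s (x q) (ereal (pl 0 q))"
      proof (intro allI impI)
        fix q assume "q \<le> j"
        show "hw_ok R d (Suc k) s (x q) (ereal (pl 0 q))"
        proof (cases "q \<le> i")
          case True then show ?thesis using hw_mono[OF _ order_refl hall[rule_format, OF True], of "Suc k"] by simp
        next
          case False then show ?thesis using reachq below \<open>q \<le> j\<close> j by simp
        qed
      qed
      show ?thesis
      proof (cases "\<theta> < pl i j")
        case True
        have "real (Suc k) * \<theta> < pl 0 j"
          using kth True padd[of 0 i j] j by (simp add: algebra_simps)
        then show ?thesis using allj j by blast
      next
        case False
        have notall: "Ksel v \<noteq> V" using q0 xV[of q0] by auto
        then obtain b where b: "b \<in> Ksel v" "b \<in> B" using good[OF vV] by blast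
        then have Bne: "B \<noteq> {}" by blast
        define p where "p = piv B v"
        have "d v p \<le> d v b" using piv[OF Bne] vV b p_def by blast
        also have "\<dots> \<le> d v (x q0)" using knn[OF vV] b q0 xV[of q0] by blast
        also have "\<dots> \<le> ereal (pl i q0)" using dpl q0 v_def by simp
        also have "\<dots> \<le> ereal (\<theta> + W)"
          using padd[of i j "Suc j"] pW[of j] j False by simp
        finally have dvp: "d v p \<le> ereal (\<theta> + W)" .
        have "d s p \<le> d s v + d v p" by (rule dtri)
        also have "\<dots> \<le> ereal (pl 0 i) + ereal (\<theta> + W)"
          using dpl[of 0 i] im x0 v_def dvp by (intro add_mono) auto
        finally have h1: "d s p \<le> ereal (pl 0 i) + ereal (\<theta> + W)" .
        have "d p t \<le> d p v + d v t" by (rule dtri)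
        also have "\<dots> = d v p + d v t" using dsym by simp
        also have "\<dots> \<le> ereal (\<theta> + W) + ereal (pl i m)"
          using dpl[of i m] im xm v_def dvp by (intro add_mono) auto
        finally have h2: "d p t \<le> ereal (\<theta> + W) + ereal (pl i m)" .
        have "d s p + d p t \<le> (ereal (pl 0 i) + ereal (\<theta> + W)) + (ereal (\<theta> + W) + ereal (pl i m))"
          using h1 h2 by (rule add_mono)
        also have "\<dots> = ereal (pl 0 m + 2*\<theta> + 2*W)"
          using padd[of 0 i m] im by simp
        finally have "d s p + d p t \<le> ereal (pl 0 m + 2*\<theta> + 2*W)" .
        moreover have "v \<in> reach_hops R h s"
          using hw_reach[of R d k s v, OF _ kh'] hall v_def by blast
        ultimately show ?thesis using Bne p_def by blast
      qed
    qed
  qed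
qed



lemma sub_walk:
  assumes "is_walk E xs" "i \<le> j" "j < length xs"
  shows "map ((!) xs) [i..<Suc j] \<in> walks E (xs!i) (xs!j) \<and>
    walk_weight (\<lambda>a b. ereal (w a b)) (map ((!) xs) [i..<Suc j]) = ereal (\<Sum>q\<in>{i..<j}. w (xs!q) (xs!Suc q))"
proof -
  define ys where "ys = map ((!) xs) [i..<Suc j]"
  have len: "length ys = Suc j - i" using assms(2) by (simp add: ys_def Suc_diff_le)
  have nth: "ys ! q = xs ! (i + q)" if "q < Suc j - i" for q
    using that assms(2) unfolding ys_def by (subst nth_map_upt) auto
  have ne: "ys \<noteq> []" using len assms by auto
  have walk: "is_walk E ys"
    unfolding is_walk_def
  proof (intro conjI allI impI ne)
    fix q assume q: "Suc q < length ys"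
    then have "Suc (i + q) < length xs" using len assms by simp
    then have "(xs ! (i+q), xs ! Suc (i+q)) \<in> E" using assms(1) unfolding is_walk_def by blast
    then show "(ys ! q, ys ! Suc q) \<in> E" using nth[of q] nth[of "Suc q"] q len by simp
  qed
  have hd: "hd ys = xs ! i" using ne nth[of 0] len assms by (simp add: hd_conv_nth)
  have lst: "last ys = xs ! j" using ne nth[of "j - i"] len assms by (simp add: last_conv_nth)
  have "walk_weight (\<lambda>a b. ereal (w a b)) ys = ereal (\<Sum>q<j - i. w (ys ! q) (ys ! Suc q))"
    by (simp add: walk_weight_def len)
  also have "(\<Sum>q<j - i. w (ys ! q) (ys ! Suc q)) = (\<Sum>q<j - i. w (xs ! (i+q)) (xs ! Suc (i+q)))"
    by (rule sum.cong) (auto simp: nth)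
  also have "\<dots> = (\<Sum>q\<in>{i..<j}. w (xs!q) (xs!Suc q))"
    by (simp add: sum.atLeastLessThan_shift_0[of _ i j] atLeast0LessThan comp_def)
  finally show ?thesis using walk hd lst unfolding ys_def[symmetric] walks_def by simp
qed

lemma hop_dist_ge:
  assumes wnn: "\<forall>(u, v)\<in>E. 0 \<le> w u v"
  shows "gdist E w s v \<le> hop_dist R (gdist E w) h s v"
  unfolding hop_dist_def
proof (rule INF_greatest)
  fix ys assume "ys \<in> hop_walks R h s v"
  then have "ys \<noteq> []" "hd ys = s" "last ys = v" by (auto simp: hop_walks_def walks_def)
  then show "gdist E w s v \<le> walk_weight (gdist E w) ys"
    using walk_chain_tri[of "gdist E w" ys] gdist_tri[OF wnn] gdist_refl[OF wnn] by simp
qed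



lemma det:
  assumes EV: "E \<subseteq> V \<times> V" and symE: "sym E"
    and wE: "\<forall>(u, v)\<in>E. w u v = w v u \<and> 0 \<le> w u v \<and> w u v \<le> W" and W0: "0 \<le> W"
    and knn: "knn_sets V E w K Ksel" and pf: "pivot_fun V E w piv"
    and good: "\<forall>v\<in>V. Ksel v \<noteq> V \<longrightarrow> Ksel v \<inter> B \<noteq> {}" and BV: "B \<subseteq> V"
    and h1: "1 \<le> h" and heps: "1 / real h \<le> \<epsilon>" and eps: "0 < \<epsilon>"
    and sV: "s \<in> V" and tV: "t \<in> V"
  shows "gdist E w s t \<le> dist_query V E w Ksel piv h B s t \<and>
         dist_query V E w Ksel piv h B s t \<le> ereal (1 + \<epsilon>) * gdist E w s t + ereal (2 * W)"
proof -
  have wnn: "\<forall>(u,v)\<in>E. 0 \<le> w u v" using wE by auto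
  have wsym: "\<forall>(a,b)\<in>E. w a b = w b a" using wE by auto
  have dsym: "\<And>u v. gdist E w u v = gdist E w v u" using gdist_sym[OF wnn symE wsym] .
  have dtri: "\<And>u v z. gdist E w u z \<le> gdist E w u v + gdist E w v z" using gdist_tri[OF wnn] .
  have dnn: "\<And>u v. 0 \<le> gdist E w u v" using gdist_nonneg[OF wnn] .
  define R where "R = hop_graph V Ksel"
  define As where "As = reach_hops R h s"
  define At where "At = reach_hops R h t"
  define d1 where "d1 = Inf ((\<lambda>v. hop_dist R (gdist E w) h s v + hop_dist R (gdist E w) h t v) ` (As \<inter> At))"
  define d2 where "d2 = (if B = {} then \<infinity> else
                 Inf ((\<lambda>v. gdist E w s (piv B v) + gdist E w (piv B v) t) ` (As \<union> At)))"
  have dq: "dist_query V E w Ksel piv h B s t = min d1 d2" if "(s,t) \<in> E\<^sup>*"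
    using that by (simp add: dist_query_def Let_def R_def As_def At_def d1_def d2_def)
  have dqn: "dist_query V E w Ksel piv h B s t = \<infinity>" if "(s,t) \<notin> E\<^sup>*"
    using that by (simp add: dist_query_def)
  have lower: "gdist E w s t \<le> dist_query V E w Ksel piv h B s t"
  proof (cases "(s,t) \<in> E\<^sup>*")
    case False then show ?thesis using dqn by simp
  next
    case True
    have "gdist E w s t \<le> d1" unfolding d1_def
    proof (rule INF_greatest)
      fix v
      have "gdist E w s t \<le> gdist E w s v + gdist E w t v" using dtri[of s t v] dsym[of v t] by simp
      also have "\<dots> \<le> hop_dist R (gdist E w) h s v + hop_dist R (gdist E w) h t v"
        by (intro add_mono hop_dist_ge[OF wnn])
      finally show "gdist E w s t \<le> hop_dist R (gdist E w) h s v + hop_dist R (gdist E w) h t v" .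
    qed
    moreover have "gdist E w s t \<le> d2" unfolding d2_def
      by (auto intro!: INF_greatest dtri)
    ultimately show ?thesis using dq[OF True] by simp
  qed
  have upper: "dist_query V E w Ksel piv h B s t \<le> ereal (1 + \<epsilon>) * gdist E w s t + ereal (2 * W)"
  proof (cases "(s,t) \<in> E\<^sup>*")
    case False
    then show ?thesis using gdist_infty[OF wnn False] eps by simp
  next
    case True
    have key: "min d1 d2 \<le> ereal ((1+\<epsilon>) * walk_weight w xs + 2*W)" if xs: "xs \<in> walks E s t" for xs
    proof -
      have xw: "is_walk E xs" "hd xs = s" "last xs = t" "xs \<noteq> []" using xs by (auto simp: walks_def)
      define m where "m = length xs - 1"
      have lenm: "length xs = Suc m" using xw(4) m_def by simp
      define pl where "pl = (\<lambda>i j. \<Sum>q\<in>{i..<j}. w (xs!q) (xs!Suc q))"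
      define x where "x = (\<lambda>q. xs ! q)"
      define L where "L = walk_weight w xs"
      have edge: "(xs!q, xs!Suc q) \<in> E" if "q < m" for q
        using xw(1) that lenm unfolding is_walk_def by simp
      have knn': "\<And>v. v \<in> V \<Longrightarrow> v \<in> Ksel v \<and> Ksel v \<subseteq> V \<and> (\<forall>a\<in>Ksel v. \<forall>b\<in>V - Ksel v. gdist E w v a \<le> gdist E w v b)"
        using knn unfolding knn_sets_def by blast
      have good': "\<And>v. v \<in> V \<Longrightarrow> Ksel v \<noteq> V \<Longrightarrow> Ksel v \<inter> B \<noteq> {}" using good by blast
      have piv': "B \<noteq> {} \<Longrightarrow> \<forall>v\<in>V. piv B v \<in> B \<and> (\<forall>b\<in>B. gdist E w v (piv B v) \<le> gdist E w v b)"
        using pf BV unfolding pivot_fun_def by blast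
      have padd: "\<And>i j k. i \<le> j \<Longrightarrow> j \<le> k \<Longrightarrow> k \<le> m \<Longrightarrow> pl i j + pl j k = pl i k"
        unfolding pl_def by (rule sum.atLeastLessThan_concat)
      have pnn: "\<And>i j. i \<le> j \<Longrightarrow> j \<le> m \<Longrightarrow> 0 \<le> pl i j"
        unfolding pl_def using edge wnn by (intro sum_nonneg) fastforce
      have pW: "\<And>q. q < m \<Longrightarrow> pl q (Suc q) \<le> W"
        unfolding pl_def using edge wE by fastforce
      have dpl: "\<And>i j. i \<le> j \<Longrightarrow> j \<le> m \<Longrightarrow> gdist E w (x i) (x j) \<le> ereal (pl i j)"
      proof -
        fix i j assume "i \<le> j" "j \<le> m"
        then have "j < length xs" using lenm by simp
        from sub_walk[OF xw(1) \<open>i \<le> j\<close> this, of w] show "gdist E w (x i) (x j) \<le> ereal (pl i j)"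
          unfolding x_def pl_def by (metis gdist_le_walk[OF wnn])
      qed
      have xV: "\<And>q. q \<le> m \<Longrightarrow> x q \<in> V"
      proof -
        fix q assume q: "q \<le> m"
        show "x q \<in> V"
        proof (cases "q < m")
          case True then show ?thesis using edge[OF True] EV x_def by auto
        next
          case False
          then have "x q = last xs" using q lenm xw(4) by (simp add: x_def last_conv_nth)
          then show ?thesis using xw tV by simp
        qed
      qed
      have x0: "x 0 = s" using xw by (simp add: x_def hd_conv_nth)
      have xm: "x m = t" using xw lenm by (simp add: x_def last_conv_nth)
      have Lpl: "L = pl 0 m" unfolding L_def pl_def walk_weight_def using lenm
        by (simp add: atLeast0LessThan)
      define \<theta> where "\<theta> = L / (2 * real h)"
      have Sres: "(\<exists>v. v \<in> reach_hops R h s \<and> B \<noteq> {} \<and> gdist E w s (piv B v) + gdist E w (piv B v) t \<le> ereal (pl 0 m + 2*\<theta> + 2*W))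
        \<or> (t \<in> reach_hops R h s \<and> hop_dist R (gdist E w) h s t \<le> ereal (pl 0 m))
        \<or> (\<exists>i<m. (h = 0 \<or> real h * \<theta> < pl 0 i) \<and> (\<forall>q\<le>i. hw_ok R (gdist E w) h s (x q) (ereal (pl 0 q))))"
        by (rule side[where d="gdist E w" and x=x and pl=pl and m=m and k=h and h=h and \<theta>=\<theta> and V=V and Ksel=Ksel and B=B and piv=piv and R=R and W=W and s=s and t=t, OF dsym dtri dnn knn' good' piv' R_def padd pnn pW dpl xV x0 xm order_refl])
      define x' where "x' = (\<lambda>q. x (m - q))"
      define pl' where "pl' = (\<lambda>i j. pl (m - j) (m - i))"
      have padd': "\<And>i j k. i \<le> j \<Longrightarrow> j \<le> k \<Longrightarrow> k \<le> m \<Longrightarrow> pl' i j + pl' j k = pl' i k"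
        unfolding pl'_def using padd by (metis add.commute diff_le_mono2 diff_le_self)
      have pnn': "\<And>i j. i \<le> j \<Longrightarrow> j \<le> m \<Longrightarrow> 0 \<le> pl' i j"
        unfolding pl'_def using pnn by (simp add: diff_le_mono2)
      have pW': "\<And>q. q < m \<Longrightarrow> pl' q (Suc q) \<le> W"
      proof -
        fix q assume q: "q < m"
        then have "m - q = Suc (m - Suc q)" by simp
        then show "pl' q (Suc q) \<le> W" unfolding pl'_def using pW[of "m - Suc q"] q by simp
      qed
      have dpl': "\<And>i j. i \<le> j \<Longrightarrow> j \<le> m \<Longrightarrow> gdist E w (x' i) (x' j) \<le> ereal (pl' i j)"
        unfolding x'_def pl'_def using dpl dsym by (metis diff_le_mono2 diff_le_self)
      have xV': "\<And>q. q \<le> m \<Longrightarrow> x' q \<in> V" unfolding x'_def using xV by simp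
      have x0': "x' 0 = t" unfolding x'_def using xm by simp
      have xm': "x' m = s" unfolding x'_def using x0 by simp
      have Tres: "(\<exists>v. v \<in> reach_hops R h t \<and> B \<noteq> {} \<and> gdist E w t (piv B v) + gdist E w (piv B v) s \<le> ereal (pl' 0 m + 2*\<theta> + 2*W))
        \<or> (s \<in> reach_hops R h t \<and> hop_dist R (gdist E w) h t s \<le> ereal (pl' 0 m))
        \<or> (\<exists>i<m. (h = 0 \<or> real h * \<theta> < pl' 0 i) \<and> (\<forall>q\<le>i. hw_ok R (gdist E w) h t (x' q) (ereal (pl' 0 q))))"
        by (rule side[where d="gdist E w" and x=x' and pl=pl' and m=m and k=h and h=h and \<theta>=\<theta> and V=V and Ksel=Ksel and B=B and piv=piv and R=R and W=W and s=t and t=s, OF dsym dtri dnn knn' good' piv' R_def padd' pnn' pW' dpl' xV' x0' xm' order_refl])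
      have pl'0m: "pl' 0 m = L" unfolding pl'_def Lpl by simp
      have Lnn: "0 \<le> L" using pnn[of 0 m] Lpl by simp
      have "L / real h \<le> L * \<epsilon>" using mult_left_mono[OF heps Lnn] by simp
      then have b1: "ereal (L + 2*\<theta> + 2*W) \<le> ereal ((1+\<epsilon>) * L + 2*W)"
        using h1 by (simp add: \<theta>_def algebra_simps)
      have b2: "ereal L \<le> ereal ((1+\<epsilon>) * L + 2*W)" using Lnn eps W0 mult_nonneg_nonneg[of \<epsilon> L] by (simp add: distrib_right)
      have hth: "real h * \<theta> = L / 2" using h1 by (simp add: \<theta>_def)
      have ss: "s \<in> As" "hop_dist R (gdist E w) h s s \<le> 0"
        using hw_reach[OF hw0[of R "gdist E w" h s] order_refl] As_def by auto
      have tt: "t \<in> At" "hop_dist R (gdist E w) h t t \<le> 0"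
        using hw_reach[OF hw0[of R "gdist E w" h t] order_refl] At_def by auto
      have d1le: "d1 \<le> hop_dist R (gdist E w) h s v + hop_dist R (gdist E w) h t v" if "v \<in> As" "v \<in> At" for v
        unfolding d1_def using that by (intro INF_lower) simp
      have d2le: "d2 \<le> gdist E w s (piv B v) + gdist E w (piv B v) t" if "B \<noteq> {}" "v \<in> As \<union> At" for v
      proof -
        have "(INF v\<in>As \<union> At. gdist E w s (piv B v) + gdist E w (piv B v) t) \<le> gdist E w s (piv B v) + gdist E w (piv B v) t"
          by (rule INF_lower[OF that(2)])
        then show ?thesis using that(1) by (simp add: d2_def)
      qed
      let ?bd = "ereal ((1+\<epsilon>) * L + 2*W)"
      have caseA: ?thesis if "v \<in> As \<union> At" "B \<noteq> {}" "gdist E w s (piv B v) + gdist E w (piv B v) t \<le> ereal (L + 2*\<theta> + 2*W)" for v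
      proof -
        have "min d1 d2 \<le> d2" by simp
        also have "\<dots> \<le> ereal (L + 2*\<theta> + 2*W)" using d2le[OF that(2,1)] that(3) by simp
        also have "\<dots> \<le> ?bd" by (rule b1)
        finally show ?thesis unfolding L_def .
      qed
      have caseB: ?thesis if "v \<in> As" "v \<in> At" "hop_dist R (gdist E w) h s v + hop_dist R (gdist E w) h t v \<le> ereal L" for v
      proof -
        have "min d1 d2 \<le> d1" by simp
        also have "\<dots> \<le> ereal L" using d1le[OF that(1,2)] that(3) by simp
        also have "\<dots> \<le> ?bd" by (rule b2)
        finally show ?thesis unfolding L_def .
      qed
      show ?thesis
      proof -
        consider (SA) "\<exists>v. v \<in> reach_hops R h s \<and> B \<noteq> {} \<and> gdist E w s (piv B v) + gdist E w (piv B v) t \<le> ereal (pl 0 m + 2*\<theta> + 2*W)"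
          | (SB) "t \<in> reach_hops R h s \<and> hop_dist R (gdist E w) h s t \<le> ereal (pl 0 m)"
          | (SC) "\<exists>i<m. (h = 0 \<or> real h * \<theta> < pl 0 i) \<and> (\<forall>q\<le>i. hw_ok R (gdist E w) h s (x q) (ereal (pl 0 q)))"
          using Sres by blast
        then show ?thesis
        proof cases
          case SA
          then obtain v where "v \<in> As" "B \<noteq> {}" "gdist E w s (piv B v) + gdist E w (piv B v) t \<le> ereal (L + 2*\<theta> + 2*W)"
            unfolding As_def Lpl by blast
          then show ?thesis using caseA[of v] by blast
        next
          case SB
          then have "t \<in> As" "hop_dist R (gdist E w) h s t + hop_dist R (gdist E w) h t t \<le> ereal L"
            using tt(2) add_mono[of "hop_dist R (gdist E w) h s t" "ereal L" "hop_dist R (gdist E w) h t t" 0]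
            unfolding As_def Lpl by auto
          then show ?thesis using caseB[of t] tt(1) by blast
        next
          case SC
          then obtain i where i: "i < m" "L / 2 < pl 0 i"
            and iall: "\<forall>q\<le>i. hw_ok R (gdist E w) h s (x q) (ereal (pl 0 q))"
            using h1 hth by auto
          consider (TA) "\<exists>v. v \<in> reach_hops R h t \<and> B \<noteq> {} \<and> gdist E w t (piv B v) + gdist E w (piv B v) s \<le> ereal (pl' 0 m + 2*\<theta> + 2*W)"
            | (TB) "s \<in> reach_hops R h t \<and> hop_dist R (gdist E w) h t s \<le> ereal (pl' 0 m)"
            | (TC) "\<exists>i<m. (h = 0 \<or> real h * \<theta> < pl' 0 i) \<and> (\<forall>q\<le>i. hw_ok R (gdist E w) h t (x' q) (ereal (pl' 0 q)))"
            using Tres by blast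
          then show ?thesis
          proof cases
            case TA
            then obtain v where "v \<in> At" "B \<noteq> {}" "gdist E w t (piv B v) + gdist E w (piv B v) s \<le> ereal (L + 2*\<theta> + 2*W)"
              unfolding At_def pl'0m by blast
            moreover have "gdist E w t (piv B v) + gdist E w (piv B v) s = gdist E w s (piv B v) + gdist E w (piv B v) t"
              using dsym add.commute by metis
            ultimately show ?thesis using caseA[of v] by auto
          next
            case TB
            then have "s \<in> At" "hop_dist R (gdist E w) h s s + hop_dist R (gdist E w) h t s \<le> ereal L"
              using ss(2) add_mono[of "hop_dist R (gdist E w) h s s" 0 "hop_dist R (gdist E w) h t s" "ereal L"]
              unfolding At_def pl'0m by auto
            then show ?thesis using caseB[of s] ss(1) by blast
          next
            case TC
            then obtain i' where i': "i' < m" "L / 2 < pl' 0 i'"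
              and i'all: "\<forall>q\<le>i'. hw_ok R (gdist E w) h t (x' q) (ereal (pl' 0 q))"
              using h1 hth by auto
            have plL: "pl 0 i + pl i m = L" using padd[of 0 i m] i Lpl by simp
            have lt: "m - i' < i"
            proof (rule ccontr)
              assume "\<not> m - i' < i"
              then have "pl i (m - i') + pl (m - i') m = pl i m" using padd[of i "m - i'" m] by simp
              moreover have "0 \<le> pl i (m - i')" using pnn[of i "m - i'"] \<open>\<not> m - i' < i\<close> by simp
              moreover have "pl' 0 i' = pl (m - i') m" unfolding pl'_def by simp
              ultimately show False using i i' plL by linarith
            qed
            have q'le: "m - i \<le> i'" using lt i by linarith
            have mi: "m - (m - i) = i" using i by simp
            have A1: "hw_ok R (gdist E w) h s (x i) (ereal (pl 0 i))" using iall by simp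
            have A2: "hw_ok R (gdist E w) h t (x i) (ereal (pl i m))"
              using i'all[rule_format, OF q'le] unfolding x'_def pl'_def mi by simp
            have r1: "x i \<in> As \<and> hop_dist R (gdist E w) h s (x i) \<le> ereal (pl 0 i)"
              using hw_reach[OF A1 order_refl] As_def by simp
            have r2: "x i \<in> At \<and> hop_dist R (gdist E w) h t (x i) \<le> ereal (pl i m)"
              using hw_reach[OF A2 order_refl] At_def by simp
            have "hop_dist R (gdist E w) h s (x i) + hop_dist R (gdist E w) h t (x i) \<le> ereal (pl 0 i) + ereal (pl i m)"
              using r1 r2 by (intro add_mono) auto
            also have "\<dots> = ereal L" using plL by simp
            finally show ?thesis using caseB[of "x i"] r1 r2 by blast
          qed
        qed
      qed
    qed
    show ?thesis
    proof (cases "gdist E w s t = \<infinity>")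
      case True then show ?thesis using eps by simp
    next
      case False
      define D where "D = real_of_ereal (gdist E w s t)"
      have gD: "gdist E w s t = ereal D" using False dnn[of s t] unfolding D_def by (cases "gdist E w s t") auto
      have ex: "\<exists>xs\<in>walks E s t. walk_weight w xs < D + e" if "0 < e" for e
      proof -
        have "gdist E w s t < ereal (D + e)" using gD that by simp
        then obtain xs where "xs \<in> walks E s t" "walk_weight (\<lambda>a b. ereal (w a b)) xs < ereal (D+e)"
          unfolding gdist_def by (auto simp: INF_less_iff)
        then show ?thesis by (auto simp: walk_weight_ereal)
      qed
      obtain xs0 where xs0: "xs0 \<in> walks E s t" using ex[of 1] by auto
      have m1: "min d1 d2 \<le> ereal ((1+\<epsilon>) * walk_weight w xs0 + 2*W)" by (rule key[OF xs0])
      have m0: "0 \<le> min d1 d2" using lower dq[OF True] dnn[of s t] by (metis order_trans)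
      obtain r where r: "min d1 d2 = ereal r" using m1 m0 by (cases "min d1 d2") auto
      have "r \<le> (1+\<epsilon>) * D + 2*W"
      proof (rule field_le_epsilon)
        fix e :: real assume e: "0 < e"
        obtain xs where xs: "xs \<in> walks E s t" "walk_weight w xs < D + e / (1+\<epsilon>)"
          using ex[of "e / (1+\<epsilon>)"] e eps by auto
        have "r \<le> (1+\<epsilon>) * walk_weight w xs + 2*W" using key[OF xs(1)] r by simp
        also have "(1+\<epsilon>) * walk_weight w xs \<le> (1+\<epsilon>) * (D + e / (1+\<epsilon>))"
          using xs(2) eps by (intro mult_left_mono) auto
        also have "(1+\<epsilon>) * (D + e / (1+\<epsilon>)) = (1+\<epsilon>) * D + e" using eps by (simp add: field_simps)
        finally show "r \<le> (1+\<epsilon>) * D + 2*W + e" by simp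
      qed
      then show ?thesis using dq[OF True] r gD by simp
    qed
  qed
  show ?thesis using lower upper by blast
qed



lemma prob_bad:
  assumes "finite V" "S \<subseteq> V" "0 \<le> p" "p \<le> 1"
  shows "measure_pmf.prob (Pi_pmf V False (\<lambda>_. bernoulli_pmf p)) {f. \<forall>u\<in>S. \<not> f u} = (1 - p) ^ card S"
proof -
  have e: "{f. \<forall>u\<in>S. \<not> f u} = Pi V (\<lambda>x. if x \<in> S then {False} else UNIV)"
    using assms(2) by (auto simp: Pi_def)
  have "measure_pmf.prob (Pi_pmf V False (\<lambda>_. bernoulli_pmf p)) (Pi V (\<lambda>x. if x \<in> S then {False} else UNIV))
      = (\<Prod>x\<in>V. measure_pmf.prob (bernoulli_pmf p) (if x \<in> S then {False} else UNIV))"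
    by (rule measure_Pi_pmf_Pi[OF assms(1)])
  also have "\<dots> = (\<Prod>x\<in>V. if x \<in> S then 1 - p else 1)"
    by (rule prod.cong) (use assms(3,4) in \<open>auto simp: measure_pmf_single pmf_bernoulli_False\<close>)
  also have "\<dots> = (1 - p) ^ card S"
    using assms(1,2) by (simp add: prod.If_cases Int_absorb1)
  finally show ?thesis using e by simp
qed

lemma tail_bound:
  fixes C :: real and n K :: nat
  assumes "0 \<le> C" "0 < K" "1 \<le> n"
  shows "(1 - min 1 (C * ln (real n) / real K)) ^ K \<le> real n powr (- C)"
proof -
  define q where "q = C * ln (real n) / real K"
  have q0: "0 \<le> q" using assms unfolding q_def by simp
  show ?thesis
  proof (cases "1 \<le> q")
    case True
    then show ?thesis using True assms unfolding q_def[symmetric] by (simp add: power_0_left)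
  next
    case False
    then have "min 1 q = q" by simp
    have "(1 - q) ^ K \<le> exp (- q) ^ K"
      using False exp_ge_add_one_self[of "-q"] by (intro power_mono) auto
    also have "\<dots> = exp (real K * (- q))" by (rule exp_of_nat_mult[symmetric])
    also have "real K * (- q) = - C * ln (real n)" using assms unfolding q_def by simp
    also have "exp (- C * ln (real n)) = real n powr (- C)" using assms by (simp add: powr_def)
    finally show ?thesis unfolding q_def[symmetric] using \<open>min 1 q = q\<close> by simp
  qed
qed



lemma main_fixed:
  fixes V :: "'a set" and C :: real and K :: nat and \<epsilon> :: real
  assumes C2: "2 \<le> C" and fin: "finite V" and Vne: "V \<noteq> {}" and EV: "E \<subseteq> V \<times> V" and symE: "sym E"
    and wE: "\<forall>(u, v)\<in>E. w u v = w v u \<and> 0 \<le> w u v \<and> w u v \<le> W"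
    and W0: "0 \<le> W" and K0: "0 < K" and eps: "0 < \<epsilon>"
    and knn: "knn_sets V E w K Ksel" and pf: "pivot_fun V E w piv"
  shows "1 - real (card V) powr (- (C - 1)) \<le> measure_pmf.prob
      (Pi_pmf V False (\<lambda>_. bernoulli_pmf (min 1 (C * ln (real (card V)) / real K))))
      {f. \<forall>s\<in>V. \<forall>t\<in>V.
           gdist E w s t \<le> dist_query V E w Ksel piv (nat \<lceil>1 / \<epsilon>\<rceil>) {v. f v} s t \<and>
           dist_query V E w Ksel piv (nat \<lceil>1 / \<epsilon>\<rceil>) {v. f v} s t
             \<le> ereal (1 + \<epsilon>) * gdist E w s t + ereal (2 * W)}"
    (is "_ \<le> measure_pmf.prob ?M ?T")
proof -
  define n where "n = card V"
  have n1: "1 \<le> n" using fin Vne n_def by (simp add: Suc_leI card_gt_0_iff)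
  define p where "p = min 1 (C * ln (real n) / real K)"
  have p01: "0 \<le> p" "p \<le> 1" using C2 n1 K0 unfolding p_def by auto
  define h where "h = nat \<lceil>1 / \<epsilon>\<rceil>"
  have "0 < 1 / \<epsilon>" using eps by simp
  then have "0 < \<lceil>1 / \<epsilon>\<rceil>" by simp
  then have h1: "1 \<le> h" unfolding h_def by linarith
  have heps: "1 / real h \<le> \<epsilon>"
  proof -
    have "1 / \<epsilon> \<le> real h" unfolding h_def by linarith
    then show ?thesis using eps h1 by (simp add: divide_le_eq mult.commute)
  qed
  define Good where "Good = {f. \<forall>v\<in>V. Ksel v \<noteq> V \<longrightarrow> (\<exists>u\<in>Ksel v. f u)}"
  define I where "I = {v\<in>V. Ksel v \<noteq> V}"
  define Bad where "Bad = (\<lambda>v. {f::'a\<Rightarrow>bool. \<forall>u\<in>Ksel v. \<not> f u})"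
  have knn': "\<And>v. v \<in> V \<Longrightarrow> v \<in> Ksel v \<and> Ksel v \<subseteq> V \<and> card (Ksel v) = min K (card V)"
    using knn unfolding knn_sets_def by blast
  have incl: "Good \<inter> set_pmf ?M \<subseteq> ?T"
  proof
    fix f assume f: "f \<in> Good \<inter> set_pmf ?M"
    have out: "\<forall>x. x \<notin> V \<longrightarrow> f x = False" using f set_Pi_pmf_subset[OF fin, of False] by blast
    have BV: "{v. f v} \<subseteq> V" using out by blast
    have good: "\<forall>v\<in>V. Ksel v \<noteq> V \<longrightarrow> Ksel v \<inter> {v. f v} \<noteq> {}" using f unfolding Good_def by blast
    show "f \<in> ?T"
      using det[OF EV symE wE W0 knn pf good BV h1 heps eps] unfolding h_def by blast
  qed
  have bad_le: "measure_pmf.prob ?M (Bad v) \<le> real n powr (- C)" if "v \<in> I" for v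
  proof -
    have vV: "v \<in> V" and ne: "Ksel v \<noteq> V" using that I_def by auto
    have sub: "Ksel v \<subseteq> V" and cd: "card (Ksel v) = min K n" using knn'[OF vV] n_def by auto
    have "card (Ksel v) < n" using psubset_card_mono[OF fin] sub ne n_def by blast
    then have cK: "card (Ksel v) = K" using cd by linarith
    have "measure_pmf.prob ?M (Bad v) = (1 - p) ^ K"
      unfolding Bad_def p_def n_def using prob_bad[OF fin sub, of p] p01 cK by (simp add: p_def n_def)
    also have "\<dots> \<le> real n powr (- C)" unfolding p_def using tail_bound[of C K n] C2 K0 n1 by simp
    finally show ?thesis .
  qed
  have compl: "UNIV - Good = (\<Union>v\<in>I. Bad v)" unfolding Good_def I_def Bad_def by auto
  have "measure_pmf.prob ?M (UNIV - Good) \<le> (\<Sum>v\<in>I. measure_pmf.prob ?M (Bad v))"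
    unfolding compl by (rule measure_pmf.finite_measure_subadditive_finite) (auto simp: I_def fin)
  also have "\<dots> \<le> (\<Sum>v\<in>I. real n powr (- C))" by (rule sum_mono) (rule bad_le)
  also have "\<dots> = real (card I) * real n powr (- C)" by simp
  also have "\<dots> \<le> real n * real n powr (- C)"
  proof -
    have "card I \<le> n" unfolding n_def I_def by (rule card_mono[OF fin]) auto
    then show ?thesis by (intro mult_right_mono) auto
  qed
  also have "\<dots> = real n powr (- (C - 1))"
  proof -
    have "real n powr (- (C - 1)) = real n powr (1 + (- C))" by simp
    also have "\<dots> = real n powr 1 * real n powr (- C)" by (rule powr_add)
    also have "\<dots> = real n * real n powr (- C)" using n1 by simp
    finally show ?thesis by simp
  qed
  finally have badb: "measure_pmf.prob ?M (UNIV - Good) \<le> real n powr (- (C - 1))" .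
  have "measure_pmf.prob ?M (UNIV - Good) = 1 - measure_pmf.prob ?M Good"
    using measure_pmf.prob_compl[of Good ?M] by simp
  then have "1 - real n powr (- (C - 1)) \<le> measure_pmf.prob ?M Good" using badb by simp
  also have "\<dots> = measure_pmf.prob ?M (Good \<inter> set_pmf ?M)" by (simp add: measure_Int_set_pmf)
  also have "\<dots> \<le> measure_pmf.prob ?M ?T"
    by (rule measure_pmf.finite_measure_mono[OF incl]) simp
  finally show ?thesis unfolding n_def p_def .
qed

theorem lemma9:
  shows "\<exists>C0>0. \<forall>C\<ge>C0. \<exists>c>0. \<forall>(V::'a set) E w W (K::nat) (\<epsilon>::real) Ksel piv.
    finite V \<and> V \<noteq> {} \<and> E \<subseteq> V \<times> V \<and> sym E \<and>
    (\<forall>(u, v)\<in>E. w u v = w v u \<and> 0 \<le> w u v \<and> w u v \<le> W) \<and>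
    (E \<noteq> {} \<longrightarrow> (\<exists>(u, v)\<in>E. w u v = W)) \<and> 0 \<le> W \<and>
    0 < K \<and> 0 < \<epsilon> \<and> knn_sets V E w K Ksel \<and> pivot_fun V E w piv
    \<longrightarrow>
    measure_pmf.prob
      (Pi_pmf V False (\<lambda>_. bernoulli_pmf (min 1 (C * ln (real (card V)) / real K))))
      {f. \<forall>s\<in>V. \<forall>t\<in>V.
           gdist E w s t \<le> dist_query V E w Ksel piv (nat \<lceil>1 / \<epsilon>\<rceil>) {v. f v} s t \<and>
           dist_query V E w Ksel piv (nat \<lceil>1 / \<epsilon>\<rceil>) {v. f v} s t
             \<le> ereal (1 + \<epsilon>) * gdist E w s t + ereal (2 * W)}
    \<ge> 1 - real (card V) powr (- c)"
  apply (rule exI[where x=2])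
  apply (intro conjI allI impI)
   apply simp
  subgoal for C
    apply (rule exI[where x="C - 1"])
    apply (intro conjI allI impI)
     apply simp
    apply (elim conjE)
    apply (rule main_fixed)
              apply assumption+
    done
  done

end
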